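(* Let $(X_i,\mu_i,Z_i)$, $i=1,\dots,n$, be i.i.d. with $\mathbb{E}[Z_i\mid\mu_i,X_i]=\mu_i$, $\mathrm{Var}[Z_i\mid\mu_i,X_i]=\sigma^2$ ($\sigma^2>0$ known). Let $\{1,\dots,n\}=I_1\sqcup I_2$ with $|I_1|=|I_2|=n/2$. For $k\in\{1,2\}$ let $\hat m_{I_k}$ be a regression function fitted (by a fixed procedure) using only $(X_i,Z_i)_{i\in I_k}$, and $\hat A_{I_2}=\big(\frac{1}{|I_2|}\sum_{i\in I_2}(\hat m_{I_1}(X_i)-Z_i)^2-\sigma^2\big)_+$, $\hat A_{I_1}=\big(\frac{1}{|I_1|}\sum_{i\in I_1}(\hat m_{I_2}(X_i)-Z_i)^2-\sigma^2\big)_+$. Define $\hat\mu_i^{\mathrm{EBCF}}=t^*_{\hat m_{I_1},\hat A_{I_2}}(X_i,Z_i)$ for $i\in I_2$ and $\hat\mu_i^{\mathrm{EBCF}}=t^*_{\hat m_{I_2},\hat A_{I_1}}(X_i,Z_i)$ for $i\in I_1$. Assume there exist $\Gamma,M<\infty$ with $\mathbb{E}[Z_i^4\mid\mu_i,X_i]\le\Gamma^4$, $|\mu_i|\le M$, and $\sup_x|\hat m_{I_k}(x)|\le M$ almost surely for $k=1,2$. Then, with $(X,\mu)$ a fresh independent draw from the same distribution and $\hat m_{n/2}$ denoting the fitted function based on $n/2$ samples $(X_i,Z_i)$, $$\frac1n\sum_{i=1}^n\mathbb{E}\big[(\mu_i-\hat\mu_i^{\mathrm{EBCF}})^2\big]\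 \le\ \frac{\sigma^2\,\mathbb{E}[(\hat m_{n/2}(X)-\mu)^2]}{\sigma^2+\mathbb{E}[(\hat m_{n/2}(X)-\mu)^2]}+O\Big(\frac{1}{\sqrt n}\Big).$$
   Context: For a function $\tilde m$ and $\tilde A\ge0$, $t^*_{\tilde m,\tilde A}(x,z)=\frac{\tilde A}{\sigma^2+\tilde A}z+\frac{\sigma^2}{\sigma^2+\tilde A}\tilde m(x)$. *)

theory Defs
  imports "HOL-Probability.Probability"
begin

text \<open>A data point is a triple (x, mu, z) :: 'x * real * real.
  A fitting procedure is  fit :: nat => (nat => 'x * real) => 'x => real :
  fit m d is the regression function fitted on the m observations d 0, ..., d (m-1)
  (each observation being a pair (X_i, Z_i)).\<close>

definition tstar :: "real \<Rightarrow> ('x \<Rightarrow> real) \<Rightarrow> real \<Rightarrow> 'x \<Rightarrow> real \<Rightarrow> real" where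
  "tstar s2 m A x z = A / (s2 + A) * z + s2 / (s2 + A) * m x"

definition obs :: "'x \<times> real \<times> real \<Rightarrow> 'x \<times> real" where
  "obs p = (fst p, snd (snd p))"

definition fitted_on ::
  "(nat \<Rightarrow> (nat \<Rightarrow> 'x \<times> real) \<Rightarrow> 'x \<Rightarrow> real) \<Rightarrow> nat set \<Rightarrow> (nat \<Rightarrow> 'x \<times> real \<times> real) \<Rightarrow> 'x \<Rightarrow> real" where
  "fitted_on fit I \<omega> = fit (card I) (restrict (\<lambda>j. obs (\<omega> (sorted_list_of_set I ! j))) {..<card I})"

definition Ahat :: "real \<Rightarrow> ('x \<Rightarrow> real) \<Rightarrow> nat set \<Rightarrow> (nat \<Rightarrow> 'x \<times> real \<times> real) \<Rightarrow> real" where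
  "Ahat s2 m J \<omega> = max 0 ((\<Sum>i\<in>J. (m (fst (\<omega> i)) - snd (snd (\<omega> i)))\<^sup>2) / real (card J) - s2)"

definition ebcf ::
  "real \<Rightarrow> (nat \<Rightarrow> (nat \<Rightarrow> 'x \<times> real) \<Rightarrow> 'x \<Rightarrow> real) \<Rightarrow> nat set \<Rightarrow> nat set \<Rightarrow> (nat \<Rightarrow> 'x \<times> real \<times> real) \<Rightarrow> nat \<Rightarrow> real" where
  "ebcf s2 fit I1 I2 \<omega> i =
     (if i \<in> I2 then tstar s2 (fitted_on fit I1 \<omega>) (Ahat s2 (fitted_on fit I1 \<omega>) I2 \<omega>) (fst (\<omega> i)) (snd (snd (\<omega> i)))
      else tstar s2 (fitted_on fit I2 \<omega>) (Ahat s2 (fitted_on fit I2 \<omega>) I1 \<omega>) (fst (\<omega> i)) (snd (snd (\<omega> i))))"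

end

theory Submission
  imports Defs
begin

lemma PiM_comp_integral:
  fixes g :: "'a \<Rightarrow> real"
  assumes Q: "prob_space Q" and i: "i \<in> J" and g: "g \<in> borel_measurable Q"
  shows "integral\<^sup>L (PiM J (\<lambda>_. Q)) (\<lambda>\<omega>. g (\<omega> i)) = integral\<^sup>L Q g"
    "integrable (PiM J (\<lambda>_. Q)) (\<lambda>\<omega>. g (\<omega> i)) \<longleftrightarrow> integrable Q g"
    "(\<integral>\<^sup>+\<omega>. ennreal (g (\<omega> i)) \<partial>PiM J (\<lambda>_. Q)) = (\<integral>\<^sup>+p. ennreal (g p) \<partial>Q)"
proof -
  have d: "distr (PiM J (\<lambda>_. Q)) Q (\<lambda>\<omega>. \<omega> i) = Q"
    by (rule distr_PiM_component[OF Q i])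
  have m: "(\<lambda>\<omega>. \<omega> i) \<in> PiM J (\<lambda>_. Q) \<rightarrow>\<^sub>M Q" using i by measurable
  show "integral\<^sup>L (PiM J (\<lambda>_. Q)) (\<lambda>\<omega>. g (\<omega> i)) = integral\<^sup>L Q g"
    using integral_distr[OF m g] d by simp
  show "integrable (PiM J (\<lambda>_. Q)) (\<lambda>\<omega>. g (\<omega> i)) \<longleftrightarrow> integrable Q g"
    using integrable_distr_eq[OF m g] d by simp
  show "(\<integral>\<^sup>+\<omega>. ennreal (g (\<omega> i)) \<partial>PiM J (\<lambda>_. Q)) = (\<integral>\<^sup>+p. ennreal (g p) \<partial>Q)"
    using nn_integral_distr[OF m, of "\<lambda>p. ennreal (g p)"] g d by simp
qed

lemma PiM_pair_integral:
  fixes g :: "'a \<Rightarrow> real"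
  assumes Q: "prob_space Q" and J: "finite J" "i \<in> J" "l \<in> J" "i \<noteq> l" and g: "integrable Q g"
  shows "integral\<^sup>L (PiM J (\<lambda>_. Q)) (\<lambda>\<omega>. g (\<omega> i) * g (\<omega> l)) = (integral\<^sup>L Q g)^2"
    "integrable (PiM J (\<lambda>_. Q)) (\<lambda>\<omega>. g (\<omega> i) * g (\<omega> l))"
proof -
  interpret pp: product_prob_space "\<lambda>_. Q" J using Q by (intro product_prob_spaceI)
  interpret Qp: prob_space Q by (rule Q)
  define f where "f = (\<lambda>j. if j = i \<or> j = l then g else (\<lambda>_. 1::real))"
  have fi: "\<And>j. j \<in> J \<Longrightarrow> integrable Q (f j)" using g by (auto simp: f_def)
  have eq: "(\<Prod>j\<in>J. f j (\<omega> j)) = g (\<omega> i) * g (\<omega> l)" for \<omega>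
  proof -
    have "(\<Prod>j\<in>J. f j (\<omega> j)) = (\<Prod>j\<in>{i,l}. f j (\<omega> j))"
      using J by (intro prod.mono_neutral_right) (auto simp: f_def)
    also have "\<dots> = g (\<omega> i) * g (\<omega> l)" using J by (simp add: f_def)
    finally show ?thesis .
  qed
  have "integral\<^sup>L (PiM J (\<lambda>_. Q)) (\<lambda>\<omega>. (\<Prod>j\<in>J. f j (\<omega> j))) = (\<Prod>j\<in>J. integral\<^sup>L Q (f j))"
    by (rule pp.product_integral_prod[OF J(1) fi])
  also have "(\<Prod>j\<in>J. integral\<^sup>L Q (f j)) = (\<Prod>j\<in>{i,l}. integral\<^sup>L Q (f j))"
    using J by (intro prod.mono_neutral_right) (auto simp: f_def prob_space.prob_space[OF Q])
  also have "\<dots> = (integral\<^sup>L Q g)^2" using J by (simp add: f_def power2_eq_square)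
  finally show "integral\<^sup>L (PiM J (\<lambda>_. Q)) (\<lambda>\<omega>. g (\<omega> i) * g (\<omega> l)) = (integral\<^sup>L Q g)^2"
    by (simp add: eq)
  show "integrable (PiM J (\<lambda>_. Q)) (\<lambda>\<omega>. g (\<omega> i) * g (\<omega> l))"
  proof -
    have "integrable (PiM J (\<lambda>_. Q)) (\<lambda>\<omega>. (\<Prod>j\<in>J. f j (\<omega> j)))"
      by (rule pp.product_integrable_prod) (use J fi in auto)
    then show ?thesis by (simp add: eq)
  qed
qed

lemma PiM_sum_sq:
  fixes g :: "'a \<Rightarrow> real"
  assumes Q: "prob_space Q" and J: "finite J" and g: "integrable Q g" and g2: "integrable Q (\<lambda>p. (g p)^2)"
    and g0: "integral\<^sup>L Q g = 0"
  shows "integral\<^sup>L (PiM J (\<lambda>_. Q)) (\<lambda>\<omega>. (\<Sum>l\<in>J. g (\<omega> l))^2) = real (card J) * integral\<^sup>L Q (\<lambda>p. (g p)^2)"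
    "integrable (PiM J (\<lambda>_. Q)) (\<lambda>\<omega>. (\<Sum>l\<in>J. g (\<omega> l))^2)"
proof -
  have gm: "g \<in> borel_measurable Q" using g by auto
  have sq: "(\<Sum>l\<in>J. g (\<omega> l))^2 = (\<Sum>i\<in>J. \<Sum>l\<in>J. g (\<omega> i) * g (\<omega> l))" for \<omega>
    by (simp add: power2_eq_square sum_product)
  have int: "integrable (PiM J (\<lambda>_. Q)) (\<lambda>\<omega>. g (\<omega> i) * g (\<omega> l))" if "i \<in> J" "l \<in> J" for i l
  proof (cases "i = l")
    case True
    then show ?thesis using PiM_comp_integral(2)[OF Q \<open>i\<in>J\<close>, of "\<lambda>p. (g p)^2"] g2 gm
      by (simp add: power2_eq_square)
  next
    case False
    then show ?thesis using PiM_pair_integral(2)[OF Q J that False g] by simp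
  qed
  have val: "integral\<^sup>L (PiM J (\<lambda>_. Q)) (\<lambda>\<omega>. g (\<omega> i) * g (\<omega> l)) = (if i = l then integral\<^sup>L Q (\<lambda>p. (g p)^2) else 0)"
    if "i \<in> J" "l \<in> J" for i l
  proof (cases "i = l")
    case True
    then show ?thesis using PiM_comp_integral(1)[OF Q \<open>i\<in>J\<close>, of "\<lambda>p. (g p)^2"] gm
      by (simp add: power2_eq_square)
  next
    case False
    then show ?thesis using PiM_pair_integral(1)[OF Q J that False g] g0 by simp
  qed
  have "integral\<^sup>L (PiM J (\<lambda>_. Q)) (\<lambda>\<omega>. (\<Sum>l\<in>J. g (\<omega> l))^2)
      = (\<Sum>i\<in>J. \<Sum>l\<in>J. integral\<^sup>L (PiM J (\<lambda>_. Q)) (\<lambda>\<omega>. g (\<omega> i) * g (\<omega> l)))"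
    unfolding sq using int by (simp add: Bochner_Integration.integral_sum integrable_sum)
  also have "\<dots> = (\<Sum>i\<in>J. \<Sum>l\<in>J. (if i = l then integral\<^sup>L Q (\<lambda>p. (g p)^2) else 0))"
    using val by simp
  also have "\<dots> = real (card J) * integral\<^sup>L Q (\<lambda>p. (g p)^2)"
    using J by (simp add: sum.delta)
  finally show "integral\<^sup>L (PiM J (\<lambda>_. Q)) (\<lambda>\<omega>. (\<Sum>l\<in>J. g (\<omega> l))^2) = real (card J) * integral\<^sup>L Q (\<lambda>p. (g p)^2)" .
  show "integrable (PiM J (\<lambda>_. Q)) (\<lambda>\<omega>. (\<Sum>l\<in>J. g (\<omega> l))^2)"
    unfolding sq using int by (simp add: integrable_sum)
qed


lemma amgm_t: "(x::real) * y \<le> t/2 * x^2 + y^2 / (2*t)" if "t > 0" for x y t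
proof -
  have "0 \<le> (t*x - y)^2 / (2*t)" using that by simp
  also have "(t*x - y)^2 / (2*t) = t/2 * x^2 + y^2 / (2*t) - x*y"
    using that by (simp add: power2_eq_square field_simps)
  finally show ?thesis by simp
qed

lemma pw_main:
  fixes s2 A Ah t mu zz mv :: real
  assumes s2: "s2 > 0" and A: "A \<ge> 0" and Ah: "Ah \<ge> 0" and t: "t > 0"
  defines "e0 \<equiv> mu - (A / (s2 + A) * zz + s2 / (s2 + A) * mv)"
  shows "(mu - (Ah / (s2 + Ah) * zz + s2 / (s2 + Ah) * mv))^2
     \<le> e0^2 + t/2 * (Ah - A)^2 + (2 * \<bar>e0\<bar> * \<bar>zz - mv\<bar> + (zz - mv)^2)^2 / (2*t* s2^2)"
proof -
  define u where "u = zz - mv"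
  define w where "w = (\<lambda>B::real. s2 / (s2 + B))"
  have ts: "B / (s2 + B) * zz + s2 / (s2 + B) * mv = zz - w B * u" if "B \<ge> 0" for B
  proof -
    have nz: "s2 + B \<noteq> 0" "B + s2 \<noteq> 0" using that s2 by auto
    have "B / (s2 + B) * zz + s2 / (s2 + B) * mv = (B * zz + s2 * mv) / (s2 + B)"
      by (simp add: add_divide_distrib)
    also have "\<dots> = zz - s2 / (s2 + B) * (zz - mv)"
      using nz by (simp add: field_simps)
    finally show ?thesis by (simp add: w_def u_def)
  qed
  define d where "d = w Ah - w A"
  have e: "mu - (Ah / (s2 + Ah) * zz + s2 / (s2 + Ah) * mv) = e0 + d * u"
    unfolding e0_def ts[OF A] ts[OF Ah] d_def by (simp add: algebra_simps)
  have w01: "0 \<le> w B \<and> w B \<le> 1" if "B \<ge> 0" for B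
    using that s2 by (simp add: w_def)
  have d1: "\<bar>d\<bar> \<le> 1" using w01[OF A] w01[OF Ah] unfolding d_def by linarith
  have d_eq: "d = s2 * (A - Ah) / ((s2 + Ah) * (s2 + A))"
    using s2 A Ah by (simp add: d_def w_def field_simps)
  have den: "s2 * s2 \<le> (s2 + Ah) * (s2 + A)" using s2 A Ah by (intro mult_mono) auto
  have d2: "\<bar>d\<bar> \<le> \<bar>Ah - A\<bar> / s2"
  proof -
    have "\<bar>d\<bar> = s2 * \<bar>A - Ah\<bar> / ((s2 + Ah) * (s2 + A))"
      using s2 A Ah by (simp add: d_eq abs_mult abs_divide)
    also have "\<dots> \<le> s2 * \<bar>A - Ah\<bar> / (s2 * s2)"
      using s2 den A Ah by (intro divide_left_mono) (auto intro!: mult_pos_pos)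
    also have "\<dots> = \<bar>Ah - A\<bar> / s2" using s2 by (simp add: abs_minus_commute)
    finally show ?thesis .
  qed
  define P where "P = 2 * \<bar>e0\<bar> * \<bar>u\<bar> + u^2"
  have P0: "P \<ge> 0" unfolding P_def by simp
  have "(e0 + d * u)^2 = e0^2 + 2 * e0 * d * u + d^2 * u^2" by (simp add: power2_eq_square algebra_simps)
  also have "2 * e0 * d * u \<le> \<bar>d\<bar> * (2 * \<bar>e0\<bar> * \<bar>u\<bar>)"
  proof -
    have "2 * e0 * d * u \<le> \<bar>2 * e0 * d * u\<bar>" by simp
    also have "\<dots> = \<bar>d\<bar> * (2 * \<bar>e0\<bar> * \<bar>u\<bar>)" by (simp add: abs_mult)
    finally show ?thesis .
  qed
  also have "d^2 * u^2 \<le> \<bar>d\<bar> * u^2"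
  proof -
    have "d^2 = \<bar>d\<bar> * \<bar>d\<bar>" by (simp add: power2_eq_square)
    also have "\<dots> \<le> \<bar>d\<bar>" using d1 by (intro mult_left_le_one_le) auto
    finally have "d^2 \<le> \<bar>d\<bar>" .
    then show ?thesis by (intro mult_right_mono) auto
  qed
  finally have "(e0 + d * u)^2 \<le> e0^2 + \<bar>d\<bar> * P" by (simp add: P_def algebra_simps)
  also have "\<bar>d\<bar> * P \<le> (\<bar>Ah - A\<bar> / s2) * P" using d2 P0 by (intro mult_right_mono) auto
  also have "(\<bar>Ah - A\<bar> / s2) * P = \<bar>Ah - A\<bar> * (P / s2)" by simp
  also have "\<dots> \<le> t/2 * \<bar>Ah - A\<bar>^2 + (P/s2)^2 / (2*t)" by (rule amgm_t[OF t])
  also have "\<dots> = t/2 * (Ah - A)^2 + P^2 / (2*t* s2^2)" by (simp add: power_divide)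
  finally show ?thesis unfolding e P_def u_def by simp
qed


locale ebs =
  fixes SX :: "'x measure"
    and D :: "('x \<times> real \<times> real) measure"
    and fit :: "nat \<Rightarrow> (nat \<Rightarrow> 'x \<times> real) \<Rightarrow> 'x \<Rightarrow> real"
    and s2 \<Gamma> M :: real and F S
  assumes F_def: "F = vimage_algebra (space D) (\<lambda>p. (fst p, fst (snd p))) (SX \<Otimes>\<^sub>M borel)"
      and S_def: "S = distr D (SX \<Otimes>\<^sub>M borel) obs"
  assumes D_prob: "prob_space D"
    and D_sets: "sets D = sets (SX \<Otimes>\<^sub>M borel \<Otimes>\<^sub>M borel)"
    and s2_pos: "s2 > 0"
    and cond_mean: "AE p in D. real_cond_exp D F (\<lambda>p. snd (snd p)) p = fst (snd p)"
    and cond_var: "AE p in D. real_cond_exp D F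
                      (\<lambda>p. (snd (snd p) - real_cond_exp D F (\<lambda>q. snd (snd q)) p)\<^sup>2) p = s2"
    and fourth_moment: "AE p in D. nn_cond_exp D F (\<lambda>p. ennreal ((snd (snd p)) ^ 4)) p \<le> ennreal (\<Gamma> ^ 4)"
    and mu_bounded: "AE p in D. \<bar>fst (snd p)\<bar> \<le> M"
    and fit_meas: "\<And>m. (\<lambda>(d, x). fit m d x)
                      \<in> borel_measurable ((\<Pi>\<^sub>M j\<in>{..<m}. SX \<Otimes>\<^sub>M borel) \<Otimes>\<^sub>M SX)"
    and fit_bounded: "\<And>m. AE d in (\<Pi>\<^sub>M j\<in>{..<m}. S). \<forall>x\<in>space SX. \<bar>fit m d x\<bar> \<le> M"
begin

interpretation P: prob_space D by (rule D_prob)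

lemma mD: "measurable D N = measurable (SX \<Otimes>\<^sub>M borel \<Otimes>\<^sub>M borel) N"
  by (rule measurable_cong_sets[OF D_sets refl])

lemma meas_x[measurable]: "fst \<in> D \<rightarrow>\<^sub>M SX" unfolding mD by measurable
lemma meas_mu[measurable]: "(\<lambda>p. fst (snd p)) \<in> borel_measurable D" unfolding mD by measurable
lemma meas_z[measurable]: "(\<lambda>p. snd (snd p)) \<in> borel_measurable D" unfolding mD by measurable
lemma meas_obs[measurable]: "obs \<in> D \<rightarrow>\<^sub>M SX \<Otimes>\<^sub>M borel" unfolding mD obs_def by measurable
lemma meas_g: "(\<lambda>p. (fst p, fst (snd p))) \<in> D \<rightarrow>\<^sub>M SX \<Otimes>\<^sub>M borel" unfolding mD by measurable

lemma subalg: "sigma_finite_subalgebra D F"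
proof -
  have "subalgebra D F"
    unfolding subalgebra_def F_def
  proof
    show "sets (vimage_algebra (space D) (\<lambda>p. (fst p, fst (snd p))) (SX \<Otimes>\<^sub>M borel)) \<subseteq> sets D"
      using meas_g by (subst sets_vimage_algebra2) (auto simp: measurable_def)
  qed simp
  then have "finite_measure_subalgebra D F"
    by (simp add: finite_measure_subalgebra_def finite_measure_subalgebra_axioms_def P.finite_measure_axioms)
  then show ?thesis by (rule finite_measure_subalgebra_is_sigma_finite)
qed

interpretation C: sigma_finite_subalgebra D F by (rule subalg)

lemma meas_F: "G \<in> borel_measurable (SX \<Otimes>\<^sub>M borel) \<Longrightarrow> (\<lambda>p. G (fst p, fst (snd p))) \<in> borel_measurable F"
proof -
  assume G: "G \<in> borel_measurable (SX \<Otimes>\<^sub>M borel)"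
  have "(\<lambda>p. (fst p, fst (snd p))) \<in> F \<rightarrow>\<^sub>M SX \<Otimes>\<^sub>M borel"
    unfolding F_def using meas_g by (intro measurable_vimage_algebra1) (auto simp: measurable_def)
  from measurable_comp[OF this G] show ?thesis by (simp add: comp_def)
qed

lemma int_z4: "integrable D (\<lambda>p. (snd (snd p)) ^ 4)"
proof -
  have "(\<integral>\<^sup>+ p. ennreal ((snd (snd p)) ^ 4) \<partial>D) = (\<integral>\<^sup>+ p. 1 * ennreal ((snd (snd p)) ^ 4) \<partial>D)" by simp
  also have "\<dots> = (\<integral>\<^sup>+ p. 1 * nn_cond_exp D F (\<lambda>p. ennreal ((snd (snd p)) ^ 4)) p \<partial>D)"
    by (rule C.nn_cond_exp_intg[symmetric]) auto
  also have "\<dots> \<le> (\<integral>\<^sup>+ p. ennreal (\<Gamma> ^ 4) \<partial>D)"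
    using fourth_moment by (intro nn_integral_mono_AE) auto
  also have "\<dots> = ennreal (\<Gamma> ^ 4)" by (simp add: P.emeasure_space_1)
  finally have "(\<integral>\<^sup>+ p. ennreal ((snd (snd p)) ^ 4) \<partial>D) < \<infinity>" using order.strict_trans1 by fastforce
  then show ?thesis
    by (intro integrableI_nonneg) auto
qed

lemma int_poly:
  assumes "g \<in> borel_measurable D" "AE p in D. \<bar>g p\<bar> \<le> c + d * (snd (snd p)) ^ 4"
  shows "integrable D g"
proof (rule Bochner_Integration.integrable_bound[OF _ assms(1)])
  show "integrable D (\<lambda>p. c + d * (snd (snd p)) ^ 4)" using int_z4 by auto
  show "AE p in D. norm (g p) \<le> norm (c + d * (snd (snd p)) ^ 4)" using assms(2) by eventually_elim auto
qed

lemma sq_le_z4: "(a::real)^2 \<le> 1 + a^4"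
proof -
  have "0 \<le> (a^2 - 1)^2" by simp
  also have "(a^2 - 1)^2 = a^4 - 2*a^2 + 1" by algebra
  finally show ?thesis using zero_le_power2[of a] by linarith
qed
lemma abs_le_z4: "\<bar>a::real\<bar> \<le> 2 + a^4"
proof -
  have "0 \<le> (\<bar>a\<bar> - 1)^2" by simp
  also have "(\<bar>a\<bar> - 1)^2 = a^2 - 2*\<bar>a\<bar> + 1" by (simp add: power2_eq_square algebra_simps)
  finally have "\<bar>a\<bar> \<le> 1 + a^2" using zero_le_power2[of a] by linarith
  then show "\<bar>a\<bar> \<le> 2 + a^4" using sq_le_z4[of a] by linarith
qed

abbreviation z :: "'x \<times> real \<times> real \<Rightarrow> real" where "z p \<equiv> snd (snd p)"
abbreviation mu :: "'x \<times> real \<times> real \<Rightarrow> real" where "mu p \<equiv> fst (snd p)"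

lemma int_zmu2: "integrable D (\<lambda>p. (z p - mu p)^2)"
proof (rule int_poly[where c="2 + 2*M^2" and d=2])
  show "AE p in D. \<bar>(z p - mu p)^2\<bar> \<le> 2 + 2*M^2 + 2 * (z p)^4"
    using mu_bounded
  proof eventually_elim
    case (elim p)
    have "(z p - mu p)^2 \<le> 2 * (z p)^2 + 2 * (mu p)^2" using zero_le_power2[of "z p + mu p"] by (simp add: power2_eq_square algebra_simps)
    moreover have "(mu p)^2 \<le> M^2" using elim abs_le_square_iff[of "mu p" M] by auto
    moreover have "\<bar>(z p - mu p)^2\<bar> = (z p - mu p)^2" by simp
    ultimately show ?case using sq_le_z4[of "z p"] by linarith
  qed
qed simp

lemma var_s2: "integral\<^sup>L D (\<lambda>p. (z p - mu p)^2) = s2"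
proof -
  have eq: "AE p in D. (z p - mu p)^2 = (z p - real_cond_exp D F z p)^2"
    using cond_mean by eventually_elim simp
  have int2: "integrable D (\<lambda>p. (z p - real_cond_exp D F z p)^2)"
    using int_zmu2 by (rule integrable_cong_AE_imp) (use eq in auto)
  have "integral\<^sup>L D (\<lambda>p. (z p - mu p)^2) = integral\<^sup>L D (\<lambda>p. (z p - real_cond_exp D F z p)^2)"
    by (rule integral_cong_AE) (use eq in auto)
  also have "\<dots> = integral\<^sup>L D (real_cond_exp D F (\<lambda>p. (z p - real_cond_exp D F z p)^2))"
    using C.real_cond_exp_int(2)[OF int2] by simp
  also have "\<dots> = integral\<^sup>L D (\<lambda>p. s2)"
    by (rule integral_cong_AE) (use cond_var in auto)
  also have "\<dots> = s2" by (simp add: P.prob_space)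
  finally show ?thesis .
qed

lemma orth:
  assumes G: "G \<in> borel_measurable (SX \<Otimes>\<^sub>M borel)" and B: "AE p in D. \<bar>G (fst p, mu p)\<bar> \<le> B"
  shows "integral\<^sup>L D (\<lambda>p. G (fst p, mu p) * (z p - mu p)) = 0"
    "integrable D (\<lambda>p. G (fst p, mu p) * (z p - mu p))"
proof -
  have [measurable]: "(\<lambda>p. G (fst p, mu p)) \<in> borel_measurable D"
    using G by measurable
  have fF: "(\<lambda>p. G (fst p, mu p)) \<in> borel_measurable F" by (rule meas_F[OF G])
  have B0: "AE p in D. 0 \<le> B" using B by eventually_elim auto
  have i1: "integrable D (\<lambda>p. G (fst p, mu p) * z p)"
  proof (rule int_poly[where c="2*B" and d=B])
    show "AE p in D. \<bar>G (fst p, mu p) * z p\<bar> \<le> 2*B + B * (z p)^4"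
      using B
    proof eventually_elim
      case (elim p)
      have "\<bar>G (fst p, mu p) * z p\<bar> \<le> B * \<bar>z p\<bar>"
        by (simp add: abs_mult elim mult_right_mono)
      also have "\<dots> \<le> B * (2 + (z p)^4)" using elim abs_le_z4[of "z p"]
        by (intro mult_left_mono) auto
      finally show ?case by (simp add: algebra_simps)
    qed
  qed simp
  have i2: "integrable D (\<lambda>p. G (fst p, mu p) * mu p)"
  proof (rule int_poly[where c="B*M" and d=0])
    show "AE p in D. \<bar>G (fst p, mu p) * mu p\<bar> \<le> B * M + 0 * (z p)^4"
      using B mu_bounded
    proof eventually_elim
      case (elim p)
      then show ?case by (simp add: abs_mult mult_mono')
    qed
  qed simp
  have "integral\<^sup>L D (\<lambda>p. G (fst p, mu p) * real_cond_exp D F z p) = integral\<^sup>L D (\<lambda>p. G (fst p, mu p) * z p)"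
    by (rule C.real_cond_exp_intg(2)[OF i1 fF]) simp
  moreover have "integral\<^sup>L D (\<lambda>p. G (fst p, mu p) * real_cond_exp D F z p) = integral\<^sup>L D (\<lambda>p. G (fst p, mu p) * mu p)"
    by (rule integral_cong_AE) (use cond_mean in auto)
  ultimately have "integral\<^sup>L D (\<lambda>p. G (fst p, mu p) * z p) = integral\<^sup>L D (\<lambda>p. G (fst p, mu p) * mu p)" by simp
  then show "integral\<^sup>L D (\<lambda>p. G (fst p, mu p) * (z p - mu p)) = 0"
    using i1 i2 by (simp add: right_diff_distrib)
  show "integrable D (\<lambda>p. G (fst p, mu p) * (z p - mu p))"
    using i1 i2 by (simp add: right_diff_distrib)
qed

lemma M_nonneg: "M \<ge> 0"
proof -
  have "AE p in D. 0 \<le> M" using mu_bounded by eventually_elim auto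
  then show ?thesis by simp
qed

lemma pow4_le: "((a::real) + b)^4 \<le> 8 * (a^4 + b^4)"
proof -
  have 1: "(a + b)^2 \<le> 2 * (a^2 + b^2)" using zero_le_power2[of "a - b"] by (simp add: power2_eq_square algebra_simps)
  have 2: "(a^2 + b^2)^2 \<le> 2 * (a^4 + b^4)" using zero_le_power2[of "a^2 - b^2"]
    by (simp add: power2_eq_square algebra_simps power4_eq_xxxx)
  have "(a + b)^4 = ((a + b)^2)^2" by simp
  also have "\<dots> \<le> (2 * (a^2 + b^2))^2" using 1 by (intro power_mono) auto
  also have "\<dots> = 4 * (a^2 + b^2)^2" by algebra
  also have "\<dots> \<le> 8 * (a^4 + b^4)" using 2 by simp
  finally show ?thesis .
qed

lemma int_K4: "integrable D (\<lambda>p. (M + \<bar>z p\<bar>)^4)"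
proof (rule int_poly[where c="8*M^4" and d=8])
  show "AE p in D. \<bar>(M + \<bar>z p\<bar>)^4\<bar> \<le> 8*M^4 + 8 * (z p)^4"
    using pow4_le[of M "\<bar>z p\<bar>" for p] by (auto simp: power_abs)
qed simp

lemma int_K:
  assumes "g \<in> borel_measurable D" "AE p in D. \<bar>g p\<bar> \<le> c + d * (M + \<bar>z p\<bar>)^4"
  shows "integrable D g"
proof (rule Bochner_Integration.integrable_bound[OF _ assms(1)])
  show "integrable D (\<lambda>p. c + d * (M + \<bar>z p\<bar>)^4)" using int_K4 by auto
  show "AE p in D. norm (g p) \<le> norm (c + d * (M + \<bar>z p\<bar>)^4)" using assms(2) by eventually_elim auto
qed

definition Am :: "('x \<Rightarrow> real) \<Rightarrow> real" where
  "Am m = integral\<^sup>L D (\<lambda>p. (m (fst p) - mu p)^2)"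

definition V :: real where "V = integral\<^sup>L D (\<lambda>p. (M + \<bar>z p\<bar>)^4)"

definition P1 :: "('x \<Rightarrow> real) \<Rightarrow> 'x \<times> real \<times> real \<Rightarrow> real" where
  "P1 m p = (let e0 = mu p - tstar s2 m (Am m) (fst p) (z p) in
      (2 * \<bar>e0\<bar> * \<bar>z p - m (fst p)\<bar> + (z p - m (fst p))^2)^2)"

lemma space_fst: "p \<in> space D \<Longrightarrow> fst p \<in> space SX"
  using meas_x by (auto simp: measurable_def)

context
  fixes m assumes mm[measurable]: "m \<in> borel_measurable SX" and mb: "\<forall>v\<in>space SX. \<bar>m v\<bar> \<le> M"
begin

lemma mbD: "p \<in> space D \<Longrightarrow> \<bar>m (fst p)\<bar> \<le> M" using mb space_fst by auto

lemma AE_K: "AE p in D. \<bar>mu p - z p\<bar> \<le> M + \<bar>z p\<bar> \<and> \<bar>z p - m (fst p)\<bar> \<le> M + \<bar>z p\<bar>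
     \<and> \<bar>m (fst p) - mu p\<bar> \<le> 2 * M \<and> 0 \<le> M + \<bar>z p\<bar>"
  using mu_bounded AE_space
proof (eventually_elim)
  case (elim p)
  then show ?case using mbD[of p] M_nonneg by auto
qed

lemma int_mmu: "integrable D (\<lambda>p. (m (fst p) - mu p)^2)"
proof (rule int_K[where c="4*M^2" and d=0])
  show "AE p in D. \<bar>(m (fst p) - mu p)^2\<bar> \<le> 4*M^2 + 0 * (M + \<bar>z p\<bar>)^4"
    using AE_K
  proof eventually_elim
    case (elim p)
    then have "(m (fst p) - mu p)^2 \<le> (2*M)^2" using abs_le_square_iff[of "m (fst p) - mu p" "2*M"] M_nonneg by auto
    then show ?case by (simp add: power2_eq_square)
  qed
qed simp

lemma Am_nonneg: "Am m \<ge> 0" unfolding Am_def by simp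

lemma orth_m: "integral\<^sup>L D (\<lambda>p. (m (fst p) - mu p) * (z p - mu p)) = 0"
  "integrable D (\<lambda>p. (m (fst p) - mu p) * (z p - mu p))"
proof -
  have G: "(\<lambda>(v, r). m v - r) \<in> borel_measurable (SX \<Otimes>\<^sub>M borel)" by measurable
  have B: "AE p in D. \<bar>(\<lambda>(v, r). m v - r) (fst p, mu p)\<bar> \<le> 2*M" using AE_K by eventually_elim auto
  show "integral\<^sup>L D (\<lambda>p. (m (fst p) - mu p) * (z p - mu p)) = 0"
    using orth(1)[OF G B] by simp
  show "integrable D (\<lambda>p. (m (fst p) - mu p) * (z p - mu p))"
    using orth(2)[OF G B] by simp
qed

lemma int_f: "integrable D (\<lambda>p. (m (fst p) - z p)^2)"
  "integral\<^sup>L D (\<lambda>p. (m (fst p) - z p)^2) = Am m + s2"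
proof -
  have eq: "(\<lambda>p. (m (fst p) - z p)^2) = (\<lambda>p. (m (fst p) - mu p)^2 - 2 * ((m (fst p) - mu p) * (z p - mu p)) + (z p - mu p)^2)"
    by (rule ext) (simp add: power2_eq_square algebra_simps)
  show "integrable D (\<lambda>p. (m (fst p) - z p)^2)"
    unfolding eq using int_mmu orth_m(2) int_zmu2 by auto
  show "integral\<^sup>L D (\<lambda>p. (m (fst p) - z p)^2) = Am m + s2"
    unfolding eq using int_mmu orth_m int_zmu2 var_s2 by (simp add: Am_def)
qed

lemma int_f2: "integrable D (\<lambda>p. ((m (fst p) - z p)^2)^2)"
  "integral\<^sup>L D (\<lambda>p. ((m (fst p) - z p)^2)^2) \<le> V"
proof -
  have AEb: "AE p in D. \<bar>((m (fst p) - z p)^2)^2\<bar> \<le> (M + \<bar>z p\<bar>)^4"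
    using AE_K
  proof eventually_elim
    case (elim p)
    then have "\<bar>m (fst p) - z p\<bar> \<le> M + \<bar>z p\<bar>" by (simp add: abs_minus_commute)
    then have "\<bar>m (fst p) - z p\<bar>^4 \<le> (M + \<bar>z p\<bar>)^4" by (intro power_mono) auto
    then show ?case by (simp add: power_abs flip: power_mult)
  qed
  show i: "integrable D (\<lambda>p. ((m (fst p) - z p)^2)^2)"
    by (rule int_K[where c=0 and d=1]) (use AEb in auto)
  show "integral\<^sup>L D (\<lambda>p. ((m (fst p) - z p)^2)^2) \<le> V"
    unfolding V_def using i int_K4 AEb by (intro integral_mono_AE) auto
qed

lemma main_term: "integrable D (\<lambda>p. (mu p - tstar s2 m (Am m) (fst p) (z p))^2)"
  "integral\<^sup>L D (\<lambda>p. (mu p - tstar s2 m (Am m) (fst p) (z p))^2) = s2 * Am m / (s2 + Am m)"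
proof -
  define A where "A = Am m"
  define a where "a = A / (s2 + A)"
  have A0: "A \<ge> 0" using Am_nonneg by (simp add: A_def)
  have 1: "s2 / (s2 + A) = 1 - a" using A0 s2_pos by (simp add: a_def field_simps)
  have ts: "tstar s2 m (Am m) v zz = a * zz + (1-a) * m v" for v zz
    unfolding tstar_def A_def[symmetric] by (simp only: 1 a_def[symmetric])
  have eq: "(\<lambda>p. (mu p - tstar s2 m (Am m) (fst p) (z p))^2) = (\<lambda>p. a^2 * (z p - mu p)^2 + (1-a)^2 * (m (fst p) - mu p)^2
      + (2*a*(1-a)) * ((m (fst p) - mu p) * (z p - mu p)))"
    by (rule ext) (simp add: ts power2_eq_square algebra_simps)
  show "integrable D (\<lambda>p. (mu p - tstar s2 m (Am m) (fst p) (z p))^2)"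
    unfolding eq using int_mmu orth_m(2) int_zmu2 by auto
  have "integral\<^sup>L D (\<lambda>p. (mu p - tstar s2 m (Am m) (fst p) (z p))^2) = a^2 * s2 + (1-a)^2 * A"
    unfolding eq using int_mmu orth_m int_zmu2 var_s2 by (simp add: Am_def A_def)
  also have "\<dots> = s2 * A / (s2 + A)"
  proof -
    have nz: "s2 + A \<noteq> 0" using A0 s2_pos by auto
    have "1 - a = s2 / (s2 + A)" using 1 by simp
    then have "a^2 * s2 + (1-a)^2 * A = (A/(s2+A))^2* s2 + (s2/(s2+A))^2 * A" unfolding a_def by simp
    also have "\<dots> = (A^2 * s2 + s2^2 * A)/(s2+A)^2" by (simp add: power_divide add_divide_distrib)
    also have "A^2 * s2 + s2^2 * A = (s2*A)*(s2+A)" by (simp add: power2_eq_square algebra_simps)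
    also have "(s2*A)*(s2+A)/(s2+A)^2 = s2*A/(s2+A)" using nz by (simp add: power2_eq_square)
    finally show ?thesis .
  qed
  finally show "integral\<^sup>L D (\<lambda>p. (mu p - tstar s2 m (Am m) (fst p) (z p))^2) = s2 * Am m / (s2 + Am m)"
    by (simp add: A_def)
qed

lemma int_P1: "integrable D (P1 m)" "integral\<^sup>L D (P1 m) \<le> 25 * V"
proof -
  define A where "A = Am m"
  have A0: "A \<ge> 0" using Am_nonneg by (simp add: A_def)
  have AEb: "AE p in D. \<bar>P1 m p\<bar> \<le> 25 * (M + \<bar>z p\<bar>)^4"
    using AE_K
  proof eventually_elim
    case (elim p)
    define K where "K = M + \<bar>z p\<bar>"
    define w where "w = s2 / (s2 + A)"
    have w01: "0 \<le> w" "w \<le> 1" using A0 s2_pos by (auto simp: w_def)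
    have ts: "tstar s2 m A (fst p) (z p) = z p - w * (z p - m (fst p))"
    proof -
      have h: "A / (s2 + A) = 1 - w" using A0 s2_pos by (simp add: w_def field_simps)
      show ?thesis unfolding tstar_def by (simp only: h w_def[symmetric]) (simp add: algebra_simps)
    qed
    define e0 where "e0 = mu p - tstar s2 m A (fst p) (z p)"
    have "\<bar>e0\<bar> \<le> \<bar>mu p - z p\<bar> + w * \<bar>z p - m (fst p)\<bar>"
    proof -
      have "mu p - (z p - w * (z p - m (fst p))) = (mu p - z p) + w * (z p - m (fst p))" by simp
      then have "\<bar>e0\<bar> = \<bar>(mu p - z p) + w * (z p - m (fst p))\<bar>" unfolding e0_def ts by simp
      also have "\<dots> \<le> \<bar>mu p - z p\<bar> + \<bar>w * (z p - m (fst p))\<bar>" by (rule abs_triangle_ineq)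
      also have "\<bar>w * (z p - m (fst p))\<bar> = w * \<bar>z p - m (fst p)\<bar>" using w01 by (simp add: abs_mult)
      finally show ?thesis .
    qed
    also have "\<dots> \<le> K + 1 * K" using elim w01 unfolding K_def by (intro add_mono mult_mono) auto
    finally have e0b: "\<bar>e0\<bar> \<le> 2 * K" by simp
    have ub: "\<bar>z p - m (fst p)\<bar> \<le> K" using elim by (simp add: K_def)
    have K0: "K \<ge> 0" using elim by (simp add: K_def)
    have "2 * \<bar>e0\<bar> * \<bar>z p - m (fst p)\<bar> \<le> 2 * (2 * K) * K" using e0b ub K0 by (intro mult_mono) auto
    moreover have "(z p - m (fst p))^2 \<le> K^2" using ub abs_le_square_iff[of "z p - m (fst p)" K] K0 by auto
    ultimately have Pb: "2 * \<bar>e0\<bar> * \<bar>z p - m (fst p)\<bar> + (z p - m (fst p))^2 \<le> 5 * K^2" by (simp add: power2_eq_square)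
    have "P1 m p = (2 * \<bar>e0\<bar> * \<bar>z p - m (fst p)\<bar> + (z p - m (fst p))^2)^2"
      by (simp add: P1_def e0_def A_def Let_def)
    also have "\<dots> \<le> (5 * K^2)^2" using Pb by (intro power_mono) auto
    also have "\<dots> = 25 * K^4" by (simp add: power2_eq_square power4_eq_xxxx)
    finally show ?case by (simp add: K_def P1_def Let_def)
  qed
  have [measurable]: "P1 m \<in> borel_measurable D" unfolding P1_def tstar_def Let_def by measurable
  show i: "integrable D (P1 m)"
    by (rule int_K[where c=0 and d=25]) (use AEb in auto)
  have "integral\<^sup>L D (P1 m) \<le> integral\<^sup>L D (\<lambda>p. 25 * (M + \<bar>z p\<bar>)^4)"
    using i int_K4 AEb by (intro integral_mono_AE) auto
  then show "integral\<^sup>L D (P1 m) \<le> 25 * V" unfolding V_def by simp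
qed


lemma g_facts:
  defines "g \<equiv> (\<lambda>p. (m (fst p) - z p)^2 - (Am m + s2))"
  shows "integrable D g" "integral\<^sup>L D g = 0" "integrable D (\<lambda>p. (g p)^2)" "integral\<^sup>L D (\<lambda>p. (g p)^2) \<le> V"
proof -
  define c where "c = Am m + s2"
  have gg: "g = (\<lambda>p. (m (fst p) - z p)^2 - c)" by (simp add: g_def c_def)
  show "integrable D g" unfolding gg using int_f by auto
  show "integral\<^sup>L D g = 0" unfolding gg using int_f by (simp add: c_def P.prob_space)
  have eq: "(\<lambda>p. (g p)^2) = (\<lambda>p. ((m (fst p) - z p)^2)^2 - 2 * c * (m (fst p) - z p)^2 + c^2)"
    unfolding gg by (rule ext) (simp add: power2_eq_square algebra_simps)
  show "integrable D (\<lambda>p. (g p)^2)" unfolding eq using int_f int_f2 by auto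
  have "integral\<^sup>L D (\<lambda>p. (g p)^2) = integral\<^sup>L D (\<lambda>p. ((m (fst p) - z p)^2)^2) - c^2"
    unfolding eq using int_f int_f2 by (simp add: P.prob_space c_def power2_eq_square)
  also have "\<dots> \<le> V" using int_f2(2) zero_le_power2[of c] by linarith
  finally show "integral\<^sup>L D (\<lambda>p. (g p)^2) \<le> V" .
qed

lemma max_lip: "A \<ge> 0 \<Longrightarrow> (max 0 a - A)^2 \<le> ((a::real) - A)^2"
  by (cases "a \<le> 0") (auto simp: max_def intro!: power_mono abs_le_square_iff[THEN iffD1])

lemma inner_bound:
  assumes J: "finite J" "card J = k" "k > 0" "i \<in> J" and t: "t > 0"
  shows "(\<integral>\<^sup>+ y. ennreal ((mu (y i) - tstar s2 m (Ahat s2 m J y) (fst (y i)) (z (y i)))^2) \<partial>PiM J (\<lambda>_. D))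
     \<le> ennreal (s2 * Am m / (s2 + Am m) + t / (2 * k) * V + 25 * V / (2 * t * s2^2))"
proof -
  define A where "A = Am m"
  have A0: "A \<ge> 0" using Am_nonneg by (simp add: A_def)
  define g where "g = (\<lambda>p. (m (fst p) - z p)^2 - (Am m + s2))"
  define e0 where "e0 = (\<lambda>p. (mu p - tstar s2 m (Am m) (fst p) (z p))^2)"
  define b where "b = (\<lambda>y. e0 (y i) + t/2 * ((\<Sum>l\<in>J. g (y l))^2 / k^2) + P1 m (y i) / (2 * t * s2^2))"
  have Dp: "prob_space D" by (rule D_prob)
  have pt: "(mu (y i) - tstar s2 m (Ahat s2 m J y) (fst (y i)) (z (y i)))^2 \<le> b y" for y
  proof -
    define Y where "Y = (\<Sum>l\<in>J. (m (fst (y l)) - z (y l))^2) / real (card J)"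
    have Ah: "Ahat s2 m J y = max 0 (Y - s2)" by (simp add: Ahat_def Y_def)
    have Ah0: "Ahat s2 m J y \<ge> 0" by (simp add: Ah)
    have "(Ahat s2 m J y - A)^2 \<le> (Y - s2 - A)^2" unfolding Ah by (rule max_lip[OF A0])
    also have "Y - s2 - A = (\<Sum>l\<in>J. g (y l)) / k"
    proof -
      have "(\<Sum>l\<in>J. g (y l)) = (\<Sum>l\<in>J. (m (fst (y l)) - z (y l))^2) - k * (A + s2)"
        using J by (simp add: g_def sum_subtractf A_def)
      then show ?thesis using J by (simp add: Y_def field_simps)
    qed
    also have "((\<Sum>l\<in>J. g (y l)) / k)^2 = (\<Sum>l\<in>J. g (y l))^2 / k^2" by (simp add: power_divide)
    finally have q: "(Ahat s2 m J y - A)^2 \<le> (\<Sum>l\<in>J. g (y l))^2 / k^2" .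
    have "(mu (y i) - tstar s2 m (Ahat s2 m J y) (fst (y i)) (z (y i)))^2
       \<le> e0 (y i) + t/2 * (Ahat s2 m J y - A)^2 + P1 m (y i) / (2 * t * s2^2)"
      using pw_main[OF s2_pos A0 Ah0 t, of "mu (y i)" "z (y i)" "m (fst (y i))"]
      by (simp add: tstar_def e0_def P1_def A_def Let_def)
    also have "\<dots> \<le> b y" unfolding b_def using q t by (intro add_mono mult_left_mono) auto
    finally show ?thesis .
  qed
  have mg: "g \<in> borel_measurable D" unfolding g_def by measurable
  have me0: "e0 \<in> borel_measurable D" unfolding e0_def tstar_def by measurable
  have mP: "P1 m \<in> borel_measurable D" unfolding P1_def tstar_def Let_def by measurable
  have gf: "integrable D g" "integral\<^sup>L D g = 0" "integrable D (\<lambda>p. (g p)^2)" "integral\<^sup>L D (\<lambda>p. (g p)^2) \<le> V"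
    using g_facts unfolding g_def by auto
  have i1: "integrable (PiM J (\<lambda>_. D)) (\<lambda>y. e0 (y i))"
    using PiM_comp_integral(2)[OF Dp J(4) me0] main_term(1) by (simp add: e0_def)
  have v1: "integral\<^sup>L (PiM J (\<lambda>_. D)) (\<lambda>y. e0 (y i)) = s2 * Am m / (s2 + Am m)"
    using PiM_comp_integral(1)[OF Dp J(4) me0] main_term(2) by (simp add: e0_def)
  have i3: "integrable (PiM J (\<lambda>_. D)) (\<lambda>y. P1 m (y i))"
    using PiM_comp_integral(2)[OF Dp J(4) mP] int_P1(1) by simp
  have v3: "integral\<^sup>L (PiM J (\<lambda>_. D)) (\<lambda>y. P1 m (y i)) \<le> 25 * V"
    using PiM_comp_integral(1)[OF Dp J(4) mP] int_P1(2) by simp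
  have i2: "integrable (PiM J (\<lambda>_. D)) (\<lambda>y. (\<Sum>l\<in>J. g (y l))^2)"
    by (rule PiM_sum_sq(2)[OF Dp J(1) gf(1) gf(3) gf(2)])
  have v2: "integral\<^sup>L (PiM J (\<lambda>_. D)) (\<lambda>y. (\<Sum>l\<in>J. g (y l))^2) \<le> k * V"
    using PiM_sum_sq(1)[OF Dp J(1) gf(1) gf(3) gf(2)] gf(4) J by (simp add: mult_left_mono)
  have ib: "integrable (PiM J (\<lambda>_. D)) b" unfolding b_def using i1 i2 i3 by auto
  have vb: "integral\<^sup>L (PiM J (\<lambda>_. D)) b
      = s2 * Am m / (s2 + Am m) + t/2 * (integral\<^sup>L (PiM J (\<lambda>_. D)) (\<lambda>y. (\<Sum>l\<in>J. g (y l))^2) / k^2)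
        + integral\<^sup>L (PiM J (\<lambda>_. D)) (\<lambda>y. P1 m (y i)) / (2 * t * s2^2)"
    unfolding b_def using i1 i2 i3 v1 by simp
  have kpos: "real k > 0" using J by simp
  have "t/2 * (integral\<^sup>L (PiM J (\<lambda>_. D)) (\<lambda>y. (\<Sum>l\<in>J. g (y l))^2) / k^2) \<le> t/2 * (k * V / k^2)"
    using v2 t kpos by (intro mult_left_mono divide_right_mono) auto
  also have "t/2 * (k * V / k^2) = t / (2 * k) * V" using kpos by (simp add: power2_eq_square field_simps)
  finally have w2: "t/2 * (integral\<^sup>L (PiM J (\<lambda>_. D)) (\<lambda>y. (\<Sum>l\<in>J. g (y l))^2) / k^2) \<le> t / (2 * k) * V" .
  have w3: "integral\<^sup>L (PiM J (\<lambda>_. D)) (\<lambda>y. P1 m (y i)) / (2 * t * s2^2) \<le> 25 * V / (2 * t * s2^2)"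
    using v3 t s2_pos by (intro divide_right_mono) auto
  have b0: "\<And>y. 0 \<le> b y" using pt by (meson order_trans zero_le_power2)
  have "(\<integral>\<^sup>+ y. ennreal ((mu (y i) - tstar s2 m (Ahat s2 m J y) (fst (y i)) (z (y i)))^2) \<partial>PiM J (\<lambda>_. D))
      \<le> (\<integral>\<^sup>+ y. ennreal (b y) \<partial>PiM J (\<lambda>_. D))"
    using pt by (intro nn_integral_mono) (simp add: ennreal_leI)
  also have "\<dots> = ennreal (integral\<^sup>L (PiM J (\<lambda>_. D)) b)"
    using ib b0 by (intro nn_integral_eq_integral) auto
  also have "\<dots> \<le> ennreal (s2 * Am m / (s2 + Am m) + t / (2 * k) * V + 25 * V / (2 * t * s2^2))"
    using vb w2 w3 by (intro ennreal_leI) linarith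
  finally show ?thesis by simp
qed

end

end

lemma sl_facts:
  assumes "finite J"
  shows "\<And>j. j < card J \<Longrightarrow> sorted_list_of_set J ! j \<in> J"
    "inj_on (\<lambda>j. sorted_list_of_set J ! j) {..<card J}"
proof -
  show "\<And>j. j < card J \<Longrightarrow> sorted_list_of_set J ! j \<in> J"
    using assms by (metis nth_mem length_sorted_list_of_set set_sorted_list_of_set)
  show "inj_on (\<lambda>j. sorted_list_of_set J ! j) {..<card J}"
    using assms by (intro inj_on_nth) (auto simp: distinct_sorted_list_of_set)
qed

context ebs begin

interpretation P: prob_space D by (rule D_prob)

definition T :: "nat set \<Rightarrow> (nat \<Rightarrow> 'x \<times> real \<times> real) \<Rightarrow> (nat \<Rightarrow> 'x \<times> real)" where
  "T J \<omega> = restrict (\<lambda>j. obs (\<omega> (sorted_list_of_set J ! j))) {..<card J}"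

lemma fitted_T: "fitted_on fit J \<omega> = fit (card J) (T J \<omega>)"
  by (simp add: fitted_on_def T_def)

lemma sets_S: "sets S = sets (SX \<Otimes>\<^sub>M borel)" by (simp add: S_def)

lemma S_prob: "prob_space S" unfolding S_def by (rule P.prob_space_distr) (rule meas_obs)

lemma sets_PiS: "sets (PiM K (\<lambda>_. S)) = sets (PiM K (\<lambda>_. SX \<Otimes>\<^sub>M borel))"
  by (intro sets_PiM_cong) (auto simp: sets_S)

lemma meas_T:
  assumes "finite J" "J \<subseteq> I"
  shows "T J \<in> PiM I (\<lambda>_. D) \<rightarrow>\<^sub>M PiM {..<card J} (\<lambda>_. SX \<Otimes>\<^sub>M borel)"
  unfolding T_def
proof (rule measurable_restrict)
  fix j assume "j \<in> {..<card J}"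
  then have "sorted_list_of_set J ! j \<in> I" using sl_facts(1)[OF assms(1)] assms(2) by auto
  then show "(\<lambda>x. obs (x (sorted_list_of_set J ! j))) \<in> PiM I (\<lambda>_. D) \<rightarrow>\<^sub>M SX \<Otimes>\<^sub>M borel"
    by measurable
qed

lemma meas_fit2:
  assumes "f \<in> N \<rightarrow>\<^sub>M PiM {..<k} (\<lambda>_. SX \<Otimes>\<^sub>M borel)" "Vf \<in> N \<rightarrow>\<^sub>M SX"
  shows "(\<lambda>\<omega>. fit k (f \<omega>) (Vf \<omega>)) \<in> borel_measurable N"
proof -
  have "(\<lambda>\<omega>. (f \<omega>, Vf \<omega>)) \<in> N \<rightarrow>\<^sub>M (PiM {..<k} (\<lambda>_. SX \<Otimes>\<^sub>M borel)) \<Otimes>\<^sub>M SX"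
    using assms by measurable
  from measurable_comp[OF this fit_meas[of k]] show ?thesis by (simp add: comp_def)
qed

lemma fit_sec:
  assumes "d \<in> space (PiM {..<k} (\<lambda>_. SX \<Otimes>\<^sub>M borel))"
  shows "fit k d \<in> borel_measurable SX"
  using meas_fit2[of "\<lambda>_. d" SX k "\<lambda>v. v"] assms by simp

lemma distr_T:
  assumes J: "finite J"
  shows "distr (PiM J (\<lambda>_. D)) (PiM {..<card J} (\<lambda>_. S)) (T J) = PiM {..<card J} (\<lambda>_. S)"
proof -
  let ?k = "card J"
  define R where "R = (\<lambda>\<omega>::nat \<Rightarrow> 'x \<times> real \<times> real. \<lambda>j\<in>{..<?k}. \<omega> (sorted_list_of_set J ! j))"
  have d1: "distr (PiM J (\<lambda>_. D)) (PiM {..<?k} (\<lambda>_. D)) R = PiM {..<?k} (\<lambda>_. D)"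
    unfolding R_def
    using distr_PiM_reindex[of J "\<lambda>_. D" "\<lambda>j. sorted_list_of_set J ! j" "{..<?k}"] sl_facts[OF J] D_prob
    by auto
  have mR: "R \<in> PiM J (\<lambda>_. D) \<rightarrow>\<^sub>M PiM {..<?k} (\<lambda>_. D)"
    unfolding R_def
  proof (rule measurable_restrict)
    fix j assume "j \<in> {..<card J}"
    then have "sorted_list_of_set J ! j \<in> J" using sl_facts(1)[OF J] by auto
    then show "(\<lambda>x. x (sorted_list_of_set J ! j)) \<in> PiM J (\<lambda>_. D) \<rightarrow>\<^sub>M D" by measurable
  qed
  have mobs: "obs \<in> D \<rightarrow>\<^sub>M S" using meas_obs by (subst measurable_cong_sets[OF refl sets_S])
  have d2: "distr (PiM {..<?k} (\<lambda>_. D)) (PiM {..<?k} (\<lambda>_. S)) (compose {..<?k} obs) = PiM {..<?k} (\<lambda>_. distr D S obs)"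
    by (rule distr_PiM_finite_prob_space') (use D_prob S_prob mobs in auto)
  have dS: "distr D S obs = S"
  proof -
    have "distr D S obs = distr D (SX \<Otimes>\<^sub>M borel) obs" by (rule distr_cong) (auto simp: sets_S)
    then show ?thesis by (simp add: S_def)
  qed
  have mC: "compose {..<?k} obs \<in> PiM {..<?k} (\<lambda>_. D) \<rightarrow>\<^sub>M PiM {..<?k} (\<lambda>_. S)"
    unfolding compose_def using mobs by measurable
  have "T J = compose {..<?k} obs \<circ> R"
    by (rule ext) (auto simp: T_def compose_def R_def restrict_def)
  then have "distr (PiM J (\<lambda>_. D)) (PiM {..<?k} (\<lambda>_. S)) (T J)
     = distr (distr (PiM J (\<lambda>_. D)) (PiM {..<?k} (\<lambda>_. D)) R) (PiM {..<?k} (\<lambda>_. S)) (compose {..<?k} obs)"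
    using distr_distr[OF mC mR] by simp
  also have "\<dots> = PiM {..<?k} (\<lambda>_. S)" using d1 d2 dS by simp
  finally show ?thesis .
qed


definition H :: "real \<Rightarrow> real" where "H A = s2 * A / (s2 + A)"

lemma PiS_prob: "prob_space (PiM K (\<lambda>_. S))" by (rule prob_space_PiM) (rule S_prob)

lemma space_PiS: "space (PiM K (\<lambda>_. S)) = space (PiM K (\<lambda>_. SX \<Otimes>\<^sub>M borel))"
  by (rule sets_eq_imp_space_eq[OF sets_PiS])

lemma meas_fst_PiS: "fst \<in> (PiM K (\<lambda>_. S)) \<Otimes>\<^sub>M D \<rightarrow>\<^sub>M PiM K (\<lambda>_. SX \<Otimes>\<^sub>M borel)"
proof -
  have "fst \<in> (PiM K (\<lambda>_. S)) \<Otimes>\<^sub>M D \<rightarrow>\<^sub>M PiM K (\<lambda>_. S)" by measurable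
  then show ?thesis by (subst (asm) measurable_cong_sets[OF refl sets_PiS])
qed

lemma meas_fitD: "(\<lambda>(d, p). (fit k d (fst p) - mu p)^2) \<in> borel_measurable ((PiM {..<k} (\<lambda>_. S)) \<Otimes>\<^sub>M D)"
proof -
  have "(\<lambda>q. fit k (fst q) (fst (snd q))) \<in> borel_measurable ((PiM {..<k} (\<lambda>_. S)) \<Otimes>\<^sub>M D)"
    by (rule meas_fit2[OF meas_fst_PiS]) measurable
  then have [measurable]: "(\<lambda>(d, p). fit k d (fst p)) \<in> borel_measurable ((PiM {..<k} (\<lambda>_. S)) \<Otimes>\<^sub>M D)"
    by (simp add: case_prod_beta)
  show ?thesis by measurable
qed

lemma meas_Am_fit[measurable]: "(\<lambda>d. Am (fit k d)) \<in> borel_measurable (PiM {..<k} (\<lambda>_. S))"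
proof -
  have "(\<lambda>d. \<integral>p. (fit k d (fst p) - mu p)^2 \<partial>D) \<in> borel_measurable (PiM {..<k} (\<lambda>_. S))"
    using meas_fitD by (intro P.borel_measurable_lebesgue_integral) (simp add: case_prod_beta)
  then show ?thesis by (simp add: Am_def)
qed

lemma AE_fit: "AE d in PiM {..<k} (\<lambda>_. S). fit k d \<in> borel_measurable SX \<and> (\<forall>v\<in>space SX. \<bar>fit k d v\<bar> \<le> M)"
  using fit_bounded[of k] AE_space
proof eventually_elim
  case (elim d)
  then show ?case using fit_sec[of d k] space_PiS by auto
qed

lemma Am_bound: "fit k d \<in> borel_measurable SX \<Longrightarrow> (\<forall>v\<in>space SX. \<bar>fit k d v\<bar> \<le> M) \<Longrightarrow> 0 \<le> Am (fit k d) \<and> Am (fit k d) \<le> 4 * M^2"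
proof -
  assume a: "fit k d \<in> borel_measurable SX" "\<forall>v\<in>space SX. \<bar>fit k d v\<bar> \<le> M"
  have "Am (fit k d) \<le> integral\<^sup>L D (\<lambda>p. 4 * M^2)"
    unfolding Am_def
  proof (rule integral_mono_AE)
    show "integrable D (\<lambda>p. (fit k d (fst p) - mu p)^2)" by (rule int_mmu[OF a])
    show "AE p in D. (fit k d (fst p) - mu p)^2 \<le> 4 * M^2"
      using AE_K[OF a]
    proof eventually_elim
      case (elim p)
      then have "(fit k d (fst p) - mu p)^2 \<le> (2*M)^2" using abs_le_square_iff[of _ "2*M"] M_nonneg by auto
      then show ?case by (simp add: power2_eq_square)
    qed
  qed simp
  then show ?thesis using Am_nonneg[OF a] by (simp add: P.prob_space)
qed

lemma int_Am_fit: "integrable (PiM {..<k} (\<lambda>_. S)) (\<lambda>d. Am (fit k d))"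
    "integrable (PiM {..<k} (\<lambda>_. S)) (\<lambda>d. H (Am (fit k d)))"
proof -
  interpret Q: prob_space "PiM {..<k} (\<lambda>_. S)" by (rule PiS_prob)
  have AEb: "AE d in PiM {..<k} (\<lambda>_. S). 0 \<le> Am (fit k d) \<and> Am (fit k d) \<le> 4 * M^2"
    using AE_fit by eventually_elim (use Am_bound in auto)
  show "integrable (PiM {..<k} (\<lambda>_. S)) (\<lambda>d. Am (fit k d))"
    by (rule Q.integrable_const_bound[where B="4*M^2"]) (use AEb in auto)
  have Hb: "0 \<le> A \<Longrightarrow> \<bar>H A\<bar> \<le> s2" for A
    using s2_pos by (simp add: H_def abs_of_nonneg divide_le_eq field_simps)
  show "integrable (PiM {..<k} (\<lambda>_. S)) (\<lambda>d. H (Am (fit k d)))"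
    by (rule Q.integrable_const_bound[where B="s2"]) (use AEb Hb in \<open>auto simp: H_def\<close>)
qed

lemma R_eq: "(\<integral>(d, p). (fit k d (fst p) - mu p)^2 \<partial>((PiM {..<k} (\<lambda>_. S)) \<Otimes>\<^sub>M D))
    = integral\<^sup>L (PiM {..<k} (\<lambda>_. S)) (\<lambda>d. Am (fit k d))"
proof -
  interpret Q: prob_space "PiM {..<k} (\<lambda>_. S)" by (rule PiS_prob)
  interpret PP: pair_prob_space "PiM {..<k} (\<lambda>_. S)" D
    by (simp add: pair_prob_space_def pair_sigma_finite_def Q.prob_space_axioms D_prob
        Q.sigma_finite_measure_axioms P.sigma_finite_measure_axioms)
  have int: "integrable ((PiM {..<k} (\<lambda>_. S)) \<Otimes>\<^sub>M D) (\<lambda>(d, p). (fit k d (fst p) - mu p)^2)"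
  proof (rule PP.Fubini_integrable[OF meas_fitD])
    show "integrable (PiM {..<k} (\<lambda>_. S)) (\<lambda>d. \<integral>p. norm ((\<lambda>(d, p). (fit k d (fst p) - mu p)^2) (d, p)) \<partial>D)"
      using int_Am_fit(1) by (simp add: Am_def)
    show "AE d in PiM {..<k} (\<lambda>_. S). integrable D (\<lambda>p. (\<lambda>(d, p). (fit k d (fst p) - mu p)^2) (d, p))"
      using AE_fit by eventually_elim (use int_mmu in auto)
  qed
  show ?thesis
    using PP.integral_fst'[OF int] by (simp add: Am_def)
qed

lemma tangent: "0 \<le> A \<Longrightarrow> 0 \<le> R \<Longrightarrow> H A \<le> H R + s2^2 / (s2 + R)^2 * (A - R)"
proof -
  assume A: "0 \<le> A" and R: "0 \<le> R"
  define a where "a = s2 + A"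
  define r where "r = s2 + R"
  have a0: "a > 0" and r0: "r > 0" using A R s2_pos by (auto simp: a_def r_def)
  have HA: "H A = s2 - s2^2 / a" using a0 by (simp add: H_def a_def field_simps power2_eq_square)
  have HR: "H R = s2 - s2^2 / r" using r0 by (simp add: H_def r_def field_simps power2_eq_square)
  have AR: "A - R = a - r" by (simp add: a_def r_def)
  have key: "(2*r - a) / r^2 \<le> 1 / a"
  proof -
    have "(2*r - a) * a \<le> r^2" using zero_le_power2[of "r - a"] by (simp add: power2_eq_square algebra_simps)
    then show ?thesis using a0 r0 by (simp add: field_simps)
  qed
  have "s2^2 * ((2*r - a) / r^2) \<le> s2^2 * (1 / a)" using key by (intro mult_left_mono) auto
  moreover have "s2^2 * ((2*r - a) / r^2) = s2^2 / r - s2^2 / r^2 * (a - r)" using r0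
    by (simp add: field_simps power2_eq_square)
  ultimately show ?thesis unfolding HA HR AR r_def[symmetric] by simp
qed

lemma jensen_H: "integral\<^sup>L (PiM {..<k} (\<lambda>_. S)) (\<lambda>d. H (Am (fit k d)))
     \<le> H (integral\<^sup>L (PiM {..<k} (\<lambda>_. S)) (\<lambda>d. Am (fit k d)))"
proof -
  interpret Q: prob_space "PiM {..<k} (\<lambda>_. S)" by (rule PiS_prob)
  define R where "R = integral\<^sup>L (PiM {..<k} (\<lambda>_. S)) (\<lambda>d. Am (fit k d))"
  define c where "c = s2^2 / (s2 + R)^2"
  have AEb: "AE d in PiM {..<k} (\<lambda>_. S). 0 \<le> Am (fit k d)"
    using AE_fit by eventually_elim (use Am_bound in auto)
  have R0: "0 \<le> R" unfolding R_def using AEb by (rule integral_nonneg_AE)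
  have "integral\<^sup>L (PiM {..<k} (\<lambda>_. S)) (\<lambda>d. H (Am (fit k d)))
     \<le> integral\<^sup>L (PiM {..<k} (\<lambda>_. S)) (\<lambda>d. H R + c * (Am (fit k d) - R))"
  proof (rule integral_mono_AE)
    show "integrable (PiM {..<k} (\<lambda>_. S)) (\<lambda>d. H (Am (fit k d)))" by (rule int_Am_fit(2))
    show "integrable (PiM {..<k} (\<lambda>_. S)) (\<lambda>d. H R + c * (Am (fit k d) - R))"
      using int_Am_fit(1) by auto
    show "AE d in PiM {..<k} (\<lambda>_. S). H (Am (fit k d)) \<le> H R + c * (Am (fit k d) - R)"
      using AEb by eventually_elim (use tangent R0 in \<open>auto simp: c_def\<close>)
  qed
  also have "\<dots> = H R + c * (R - R)"
    using int_Am_fit(1) by (simp add: Q.prob_space R_def right_diff_distrib)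
  finally show ?thesis by (simp add: R_def)
qed


lemma V_nonneg: "V \<ge> 0" unfolding V_def by (rule integral_nonneg_AE) auto

lemma H_nonneg: "0 \<le> A \<Longrightarrow> 0 \<le> H A" using s2_pos by (simp add: H_def)

lemma meas_T_S:
  assumes "finite J" "J \<subseteq> I"
  shows "T J \<in> PiM I (\<lambda>_. D) \<rightarrow>\<^sub>M PiM {..<card J} (\<lambda>_. S)"
  using meas_T[OF assms] by (subst measurable_cong_sets[OF refl sets_PiS])

lemma half_bound:
  assumes J: "finite J1" "finite J2" "J1 \<inter> J2 = {}" "card J1 = k" "card J2 = k" "k > 0" "i \<in> J2" and t: "t > 0"
  shows "(\<integral>\<^sup>+ \<omega>. ennreal ((mu (\<omega> i) - tstar s2 (fitted_on fit J1 \<omega>) (Ahat s2 (fitted_on fit J1 \<omega>) J2 \<omega>) (fst (\<omega> i)) (z (\<omega> i)))^2) \<partial>PiM (J1 \<union> J2) (\<lambda>_. D))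
   \<le> ennreal (integral\<^sup>L (PiM {..<k} (\<lambda>_. S)) (\<lambda>d. H (Am (fit k d))) + (t / (2 * real k) * V + 25 * V / (2 * t * s2^2)))"
proof -
  interpret PS: product_prob_space "\<lambda>_. D" "J1 \<union> J2" using D_prob by (intro product_prob_spaceI)
  interpret Q: prob_space "PiM {..<k} (\<lambda>_. S)" by (rule PiS_prob)
  define c where "c = t / (2 * real k) * V + 25 * V / (2 * t * s2^2)"
  have c0: "c \<ge> 0" using t V_nonneg s2_pos by (simp add: c_def)
  define Fin where "Fin = (\<lambda>m y. ennreal ((mu (y i) - tstar s2 m (Ahat s2 m J2 y) (fst (y i)) (z (y i)))^2))"
  have fT: "fitted_on fit J1 \<omega> = fit k (T J1 \<omega>)" for \<omega> using fitted_T J by simp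
  have mT: "T J1 \<in> PiM (J1 \<union> J2) (\<lambda>_. D) \<rightarrow>\<^sub>M PiM {..<k} (\<lambda>_. SX \<Otimes>\<^sub>M borel)"
    using meas_T[of J1 "J1 \<union> J2"] J by auto
  have mf[measurable]: "(\<lambda>\<omega>. fit k (T J1 \<omega>) (fst (\<omega> l))) \<in> borel_measurable (PiM (J1 \<union> J2) (\<lambda>_. D))"
    if "l \<in> J2" for l
  proof (rule meas_fit2[OF mT])
    have "l \<in> J1 \<union> J2" using that by simp
    from measurable_comp[OF measurable_component_singleton[OF this] meas_x]
    show "(\<lambda>\<omega>. fst (\<omega> l)) \<in> PiM (J1 \<union> J2) (\<lambda>_. D) \<rightarrow>\<^sub>M SX" by (simp add: comp_def)
  qed
  have mz[measurable]: "(\<lambda>\<omega>. z (\<omega> l)) \<in> borel_measurable (PiM (J1 \<union> J2) (\<lambda>_. D))"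
    if "l \<in> J2" for l
  proof -
    have "l \<in> J1 \<union> J2" using that by simp
    from measurable_comp[OF measurable_component_singleton[OF this] meas_z]
    show ?thesis by (simp add: comp_def)
  qed
  have mmu[measurable]: "(\<lambda>\<omega>. mu (\<omega> l)) \<in> borel_measurable (PiM (J1 \<union> J2) (\<lambda>_. D))"
    if "l \<in> J2" for l
  proof -
    have "l \<in> J1 \<union> J2" using that by simp
    from measurable_comp[OF measurable_component_singleton[OF this] meas_mu]
    show ?thesis by (simp add: comp_def)
  qed
  have meas: "(\<lambda>\<omega>. Fin (fit k (T J1 \<omega>)) \<omega>) \<in> borel_measurable (PiM (J1 \<union> J2) (\<lambda>_. D))"
    unfolding Fin_def tstar_def Ahat_def using J(7) by measurable
  have mT1: "T J1 \<in> PiM J1 (\<lambda>_. D) \<rightarrow>\<^sub>M PiM {..<k} (\<lambda>_. S)" using meas_T_S[OF J(1), of J1] J(4) by simp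
  have dT: "distr (PiM J1 (\<lambda>_. D)) (PiM {..<k} (\<lambda>_. S)) (T J1) = PiM {..<k} (\<lambda>_. S)"
    using distr_T[OF J(1)] J(4) by simp
  have mG: "(\<lambda>d. ennreal (H (Am (fit k d)) + c)) \<in> borel_measurable (PiM {..<k} (\<lambda>_. S))"
    unfolding H_def by measurable
  have mergeT: "T J1 (merge J1 J2 (x, y)) = T J1 x" for x y
    using sl_facts(1)[OF J(1)] by (auto simp: T_def merge_def restrict_def)
  have mergeF: "Fin m (merge J1 J2 (x, y)) = Fin m y" for m x y
  proof -
    have "Ahat s2 m J2 (merge J1 J2 (x, y)) = Ahat s2 m J2 y"
      unfolding Ahat_def using J(3) by (intro arg_cong2[where f=max] refl arg_cong2[where f="(-)"] arg_cong2[where f="(/)"] sum.cong) (auto simp: merge_def)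
    moreover have "merge J1 J2 (x, y) i = y i" using J(3,7) by (auto simp: merge_def)
    ultimately show ?thesis by (simp add: Fin_def)
  qed
  have "(\<integral>\<^sup>+ \<omega>. ennreal ((mu (\<omega> i) - tstar s2 (fitted_on fit J1 \<omega>) (Ahat s2 (fitted_on fit J1 \<omega>) J2 \<omega>) (fst (\<omega> i)) (z (\<omega> i)))^2) \<partial>PiM (J1 \<union> J2) (\<lambda>_. D))
     = (\<integral>\<^sup>+ \<omega>. Fin (fit k (T J1 \<omega>)) \<omega> \<partial>PiM (J1 \<union> J2) (\<lambda>_. D))"
    by (simp add: fT Fin_def)
  also have "\<dots> = (\<integral>\<^sup>+ x. (\<integral>\<^sup>+ y. Fin (fit k (T J1 (merge J1 J2 (x, y)))) (merge J1 J2 (x, y)) \<partial>PiM J2 (\<lambda>_. D)) \<partial>PiM J1 (\<lambda>_. D))"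
    by (rule PS.product_nn_integral_fold[OF J(3,1,2) meas])
  also have "\<dots> = (\<integral>\<^sup>+ x. (\<integral>\<^sup>+ y. Fin (fit k (T J1 x)) y \<partial>PiM J2 (\<lambda>_. D)) \<partial>PiM J1 (\<lambda>_. D))"
    by (simp add: mergeT mergeF)
  also have "\<dots> \<le> (\<integral>\<^sup>+ x. ennreal (H (Am (fit k (T J1 x))) + c) \<partial>PiM J1 (\<lambda>_. D))"
  proof (rule nn_integral_mono_AE)
    have "AE d in distr (PiM J1 (\<lambda>_. D)) (PiM {..<k} (\<lambda>_. S)) (T J1). fit k d \<in> borel_measurable SX \<and> (\<forall>v\<in>space SX. \<bar>fit k d v\<bar> \<le> M)"
      unfolding dT by (rule AE_fit[of k])
    from AE_distrD[OF mT1 this]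
    show "AE x in PiM J1 (\<lambda>_. D). (\<integral>\<^sup>+ y. Fin (fit k (T J1 x)) y \<partial>PiM J2 (\<lambda>_. D)) \<le> ennreal (H (Am (fit k (T J1 x))) + c)"
    proof eventually_elim
      case (elim x)
      show ?case using inner_bound[OF conjunct1[OF elim] conjunct2[OF elim] J(2) J(5) J(6) J(7) t]
        by (simp add: Fin_def H_def c_def add.assoc)
    qed
  qed
  also have "\<dots> = (\<integral>\<^sup>+ d. ennreal (H (Am (fit k d)) + c) \<partial>distr (PiM J1 (\<lambda>_. D)) (PiM {..<k} (\<lambda>_. S)) (T J1))"
    by (rule nn_integral_distr[OF mT1, symmetric]) (simp add: dT mG)
  also have "\<dots> = (\<integral>\<^sup>+ d. ennreal (H (Am (fit k d)) + c) \<partial>PiM {..<k} (\<lambda>_. S))"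
    using dT by simp
  also have "\<dots> = ennreal (integral\<^sup>L (PiM {..<k} (\<lambda>_. S)) (\<lambda>d. H (Am (fit k d)) + c))"
  proof (rule nn_integral_eq_integral)
    show "integrable (PiM {..<k} (\<lambda>_. S)) (\<lambda>d. H (Am (fit k d)) + c)" using int_Am_fit(2)[of k] by auto
    show "AE d in PiM {..<k} (\<lambda>_. S). 0 \<le> H (Am (fit k d)) + c"
      using AE_fit by eventually_elim (use Am_bound H_nonneg c0 in fastforce)
  qed
  also have "integral\<^sup>L (PiM {..<k} (\<lambda>_. S)) (\<lambda>d. H (Am (fit k d)) + c) = integral\<^sup>L (PiM {..<k} (\<lambda>_. S)) (\<lambda>d. H (Am (fit k d))) + c"
    using int_Am_fit(2)[of k] by (simp add: Q.prob_space)
  finally show ?thesis by (simp add: c_def)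
qed


lemma int_le_of_nn:
  fixes f :: "'a \<Rightarrow> real"
  assumes "(\<integral>\<^sup>+x. ennreal (f x) \<partial>N) \<le> ennreal B" "B \<ge> 0" "\<And>x. 0 \<le> f x"
  shows "integral\<^sup>L N f \<le> B"
proof (cases "integrable N f")
  case True
  then have "(\<integral>\<^sup>+x. ennreal (f x) \<partial>N) = ennreal (integral\<^sup>L N f)"
    using assms(3) by (intro nn_integral_eq_integral) auto
  then have "ennreal (integral\<^sup>L N f) \<le> ennreal B" using assms(1) by simp
  then show ?thesis using assms(2) by (simp add: ennreal_le_iff)
next
  case False
  then show ?thesis using assms(2) by (simp add: not_integrable_integral_eq)
qed

lemma final_loc:
  shows "\<exists>C. \<forall>n I1 I2. even n \<and> n \<ge> 2 \<and> I1 \<union> I2 = {..<n} \<and> I1 \<inter> I2 = {}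
            \<and> card I1 = n div 2 \<and> card I2 = n div 2 \<longrightarrow>
          (let R = (\<integral>(d, p). (fit (n div 2) d (fst p) - fst (snd p))\<^sup>2
                        \<partial>((\<Pi>\<^sub>M j\<in>{..<n div 2}. S) \<Otimes>\<^sub>M D))
           in (\<Sum>i<n. \<integral>\<omega>. (fst (snd (\<omega> i)) - ebcf s2 fit I1 I2 \<omega> i)\<^sup>2 \<partial>(\<Pi>\<^sub>M j\<in>{..<n}. D)) / real n
              \<le> s2 * R / (s2 + R) + C / sqrt (real n))"
proof -
  define C where "C = V * (1 + 25 / (2 * s2^2))"
  have C0: "C \<ge> 0" unfolding C_def using V_nonneg s2_pos by (simp add: field_simps)
  have main: "let R = (\<integral>(d, p). (fit (n div 2) d (fst p) - fst (snd p))\<^sup>2 \<partial>((\<Pi>\<^sub>M j\<in>{..<n div 2}. S) \<Otimes>\<^sub>M D))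
           in (\<Sum>i<n. \<integral>\<omega>. (fst (snd (\<omega> i)) - ebcf s2 fit I1 I2 \<omega> i)\<^sup>2 \<partial>(\<Pi>\<^sub>M j\<in>{..<n}. D)) / real n
              \<le> s2 * R / (s2 + R) + C / sqrt (real n)"
    if h: "even n \<and> n \<ge> 2 \<and> I1 \<union> I2 = {..<n} \<and> I1 \<inter> I2 = {} \<and> card I1 = n div 2 \<and> card I2 = n div 2"
    for n :: nat and I1 I2 :: "nat set"
  proof -
  define k where "k = n div 2"
  have nk: "real n = 2 * real k" using h by (auto simp: k_def elim!: evenE)
  have k0: "k > 0" using h by (simp add: k_def)
  have fin: "finite I1" "finite I2" using h by (metis finite_Un finite_lessThan)+
  have dis: "I1 \<inter> I2 = {}" "I2 \<inter> I1 = {}" using h by auto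
  have cards: "card I1 = k" "card I2 = k" using h by (auto simp: k_def)
  have U: "{..<n} = I1 \<union> I2" "{..<n} = I2 \<union> I1" using h by auto
  define R where "R = (\<integral>(d, p). (fit k d (fst p) - fst (snd p))\<^sup>2 \<partial>((\<Pi>\<^sub>M j\<in>{..<k}. S) \<Otimes>\<^sub>M D))"
  define EH where "EH = integral\<^sup>L (PiM {..<k} (\<lambda>_. S)) (\<lambda>d. H (Am (fit k d)))"
  have EH_le: "EH \<le> H R" unfolding EH_def R_def using jensen_H[of k] R_eq[of k] by simp
  have "AE d in PiM {..<k} (\<lambda>_. S). 0 \<le> H (Am (fit k d))"
    using AE_fit[of k] by eventually_elim (use Am_bound H_nonneg in fastforce)
  then have EH0: "EH \<ge> 0" unfolding EH_def by (rule integral_nonneg_AE)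
  define t where "t = sqrt (real n)"
  have t0: "t > 0" using h by (simp add: t_def)
  have tt: "t * t = real n" using h by (simp add: t_def)
  have ceq: "t / (2 * real k) * V + 25 * V / (2 * t * s2^2) = C / sqrt (real n)"
  proof -
    have "t / (2 * real k) = 1 / t" using tt t0 nk k0 by (simp add: field_simps)
    then show ?thesis unfolding C_def t_def[symmetric] using t0 s2_pos by (simp add: field_simps)
  qed
  have termb: "(\<integral>\<omega>. (fst (snd (\<omega> i)) - ebcf s2 fit I1 I2 \<omega> i)\<^sup>2 \<partial>(\<Pi>\<^sub>M j\<in>{..<n}. D)) \<le> EH + C / sqrt (real n)"
    if i: "i < n" for i
  proof (rule int_le_of_nn)
    show "0 \<le> EH + C / sqrt (real n)" using EH0 C0 by simp
    show "\<And>\<omega>. 0 \<le> (fst (snd (\<omega> i)) - ebcf s2 fit I1 I2 \<omega> i)\<^sup>2" by simp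
    show "(\<integral>\<^sup>+\<omega>. ennreal ((fst (snd (\<omega> i)) - ebcf s2 fit I1 I2 \<omega> i)\<^sup>2) \<partial>(\<Pi>\<^sub>M j\<in>{..<n}. D)) \<le> ennreal (EH + C / sqrt (real n))"
    proof (cases "i \<in> I2")
      case True
      have "(\<integral>\<^sup>+\<omega>. ennreal ((fst (snd (\<omega> i)) - ebcf s2 fit I1 I2 \<omega> i)\<^sup>2) \<partial>(\<Pi>\<^sub>M j\<in>{..<n}. D))
          = (\<integral>\<^sup>+ \<omega>. ennreal ((mu (\<omega> i) - tstar s2 (fitted_on fit I1 \<omega>) (Ahat s2 (fitted_on fit I1 \<omega>) I2 \<omega>) (fst (\<omega> i)) (z (\<omega> i)))^2) \<partial>PiM (I1 \<union> I2) (\<lambda>_. D))"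
        using True by (simp add: ebcf_def U(1)[symmetric])
      also have "\<dots> \<le> ennreal (EH + (t / (2 * real k) * V + 25 * V / (2 * t * s2^2)))"
        unfolding EH_def by (rule half_bound[OF fin(1,2) dis(1) cards(1,2) k0 True t0])
      finally show ?thesis using ceq by simp
    next
      case False
      then have i1: "i \<in> I1" using i U by auto
      have "(\<integral>\<^sup>+\<omega>. ennreal ((fst (snd (\<omega> i)) - ebcf s2 fit I1 I2 \<omega> i)\<^sup>2) \<partial>(\<Pi>\<^sub>M j\<in>{..<n}. D))
          = (\<integral>\<^sup>+ \<omega>. ennreal ((mu (\<omega> i) - tstar s2 (fitted_on fit I2 \<omega>) (Ahat s2 (fitted_on fit I2 \<omega>) I1 \<omega>) (fst (\<omega> i)) (z (\<omega> i)))^2) \<partial>PiM (I2 \<union> I1) (\<lambda>_. D))"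
        using False by (simp add: ebcf_def U(2)[symmetric])
      also have "\<dots> \<le> ennreal (EH + (t / (2 * real k) * V + 25 * V / (2 * t * s2^2)))"
        unfolding EH_def by (rule half_bound[OF fin(2,1) dis(2) cards(2,1) k0 i1 t0])
      finally show ?thesis using ceq by simp
    qed
  qed
  have "(\<Sum>i<n. \<integral>\<omega>. (fst (snd (\<omega> i)) - ebcf s2 fit I1 I2 \<omega> i)\<^sup>2 \<partial>(\<Pi>\<^sub>M j\<in>{..<n}. D)) \<le> (\<Sum>i<n. EH + C / sqrt (real n))"
    using termb by (intro sum_mono) auto
  also have "\<dots> = real n * (EH + C / sqrt (real n))" by simp
  finally have "(\<Sum>i<n. \<integral>\<omega>. (fst (snd (\<omega> i)) - ebcf s2 fit I1 I2 \<omega> i)\<^sup>2 \<partial>(\<Pi>\<^sub>M j\<in>{..<n}. D)) / real n \<le> EH + C / sqrt (real n)"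
    using h by (simp add: divide_le_eq mult.commute)
  also have "\<dots> \<le> s2 * R / (s2 + R) + C / sqrt (real n)" using EH_le by (simp add: H_def)
  finally show ?thesis
    by (simp add: R_def k_def Let_def)
  qed
  show ?thesis by (intro exI[of _ C] allI impI main) auto
qed

end

theorem corollary1:
  fixes SX :: "'x measure"
    and D :: "('x \<times> real \<times> real) measure"
    and fit :: "nat \<Rightarrow> (nat \<Rightarrow> 'x \<times> real) \<Rightarrow> 'x \<Rightarrow> real"
    and s2 \<Gamma> M :: real
  defines "F \<equiv> vimage_algebra (space D) (\<lambda>p. (fst p, fst (snd p))) (SX \<Otimes>\<^sub>M borel)"
      and "S \<equiv> distr D (SX \<Otimes>\<^sub>M borel) obs"
  assumes D_prob: "prob_space D"
    and D_sets: "sets D = sets (SX \<Otimes>\<^sub>M borel \<Otimes>\<^sub>M borel)"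
    and s2_pos: "s2 > 0"
    and cond_mean: "AE p in D. real_cond_exp D F (\<lambda>p. snd (snd p)) p = fst (snd p)"
    and cond_var: "AE p in D. real_cond_exp D F
                      (\<lambda>p. (snd (snd p) - real_cond_exp D F (\<lambda>q. snd (snd q)) p)\<^sup>2) p = s2"
    and fourth_moment: "AE p in D. nn_cond_exp D F (\<lambda>p. ennreal ((snd (snd p)) ^ 4)) p \<le> ennreal (\<Gamma> ^ 4)"
    and mu_bounded: "AE p in D. \<bar>fst (snd p)\<bar> \<le> M"
    and fit_meas: "\<And>m. (\<lambda>(d, x). fit m d x)
                      \<in> borel_measurable ((\<Pi>\<^sub>M j\<in>{..<m}. SX \<Otimes>\<^sub>M borel) \<Otimes>\<^sub>M SX)"
    and fit_bounded: "\<And>m. AE d in (\<Pi>\<^sub>M j\<in>{..<m}. S). \<forall>x\<in>space SX. \<bar>fit m d x\<bar> \<le> M"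
  shows "\<exists>C. \<forall>n I1 I2. even n \<and> n \<ge> 2 \<and> I1 \<union> I2 = {..<n} \<and> I1 \<inter> I2 = {}
            \<and> card I1 = n div 2 \<and> card I2 = n div 2 \<longrightarrow>
          (let R = (\<integral>(d, p). (fit (n div 2) d (fst p) - fst (snd p))\<^sup>2
                        \<partial>((\<Pi>\<^sub>M j\<in>{..<n div 2}. S) \<Otimes>\<^sub>M D))
           in (\<Sum>i<n. \<integral>\<omega>. (fst (snd (\<omega> i)) - ebcf s2 fit I1 I2 \<omega> i)\<^sup>2 \<partial>(\<Pi>\<^sub>M j\<in>{..<n}. D)) / real n
              \<le> s2 * R / (s2 + R) + C / sqrt (real n))"
  proof -
  interpret ebs SX D fit s2 \<Gamma> M F S
    by (rule ebs.intro) (use assms in \<open>simp_all add: F_def S_def\<close>)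
  show ?thesis by (rule final_loc)
qed

end
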